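(* Consider $N$ nodes, nodes $1,\dots,N_1$ Byzantine and nodes $N_1+1,\dots,N$ honest. For each node $i$, let $M$ be a positive integer, $\sigma_i>0$, $\eta_i\ge0$, and let $Y_i$ be such that $Y_i/\sigma_i^2$ is central chi-square with $M$ degrees of freedom under $H_0$ and non-central chi-square with $M$ degrees of freedom and non-centrality parameter $\eta_i$ under $H_1$. Each Byzantine node $i\le N_1$ reports $\tilde Y_i=Y_i+\Delta_i$ (under $H_0$) or $\tilde Y_i=Y_i-\Delta_i$ (under $H_1$) with probability $P_i\in[0,1]$, and $\tilde Y_i=Y_i$ with probability $1-P_i$; all $Y_i$ and attack decisions are mutually independent. For real coefficients $\delta_1,\dots,\delta_N$ with $\sum_{i=1}^N\delta_i=1$, consider $\Lambda_\delta=\sum_{i=1}^{N_1}\delta_i\tilde Y_i+\sum_{i=N_1+1}^N\delta_iY_i$ and its deflection coefficient $\mathcal D(\Lambda_\delta)=(\mu_1-\mu_0)^2/\sigma_{(0)}^2$. Define $$w_i^B=\frac{\eta_i\sigma_i^2-2P_i\Delta_i}{\Delta_i^2P_i(1-P_i)+2M\sigma_i^4}\ (i\le N_1),\qquad w_i^H=\frac{\eta_i}{2M\sigma_i^2}\ (i>N_1),$$ and assume $S=\sum_{i=1}^{N_1}w_i^B+\sum_{i=N_1+1}^Nw_i^H\ne0$. Then the choice $\delta_i^B=w_i^B/S$ for $i\le N_1$ and $\delta_i^H=w_i^H/S$ for $i>N_1$ maximizes $\mathcal D(\Lambda_\delta)$ over all $\delta$ with $\sum_i\delta_i=1$.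
   Context: $\mu_k=\mathbb E[\Lambda_\delta\mid H_k]$ for $k=0,1$, and $\sigma_{(0)}^2=\mathbb E[(\Lambda_\delta-\mu_0)^2\mid H_0]$. *)

theory Defs
  imports "HOL-Probability.Probability"
begin

definition chi2_density :: "nat \<Rightarrow> real \<Rightarrow> real" where
  "chi2_density k x =
     (if x > 0 then x powr (real k / 2 - 1) * exp (- x / 2) / (2 powr (real k / 2) * Gamma (real k / 2))
      else 0)"

definition ncchi2_density :: "nat \<Rightarrow> real \<Rightarrow> real \<Rightarrow> real" where
  "ncchi2_density k eta x =
     (\<Sum>j. exp (- eta / 2) * (eta / 2) ^ j / fact j * chi2_density (k + 2 * j) x)"

text \<open>Deflection coefficient (mu1 - mu0)^2 / sigma0^2, where L0 is the statistic under H0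
  (probability space M0) and L1 the statistic under H1 (probability space M1).\<close>
definition deflection :: "'a measure \<Rightarrow> 'a measure \<Rightarrow> ('a \<Rightarrow> real) \<Rightarrow> ('a \<Rightarrow> real) \<Rightarrow> real" where
  "deflection M0 M1 L0 L1 =
     (let mu0 = integral\<^sup>L M0 L0; mu1 = integral\<^sup>L M1 L1;
          var0 = integral\<^sup>L M0 (\<lambda>x. (L0 x - mu0)^2)
      in (mu1 - mu0)^2 / var0)"

text \<open>The fusion statistic Lambda_delta under H0 (reports Y_i + Delta_i B_i) and
  under H1 (reports Y_i - Delta_i B_i); B_i is the 0/1 attack indicator.\<close>
definition Lambda0 :: "nat \<Rightarrow> nat \<Rightarrow> (nat \<Rightarrow> real) \<Rightarrow> (nat \<Rightarrow> 'a \<Rightarrow> real) \<Rightarrow> (nat \<Rightarrow> 'a \<Rightarrow> real)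
    \<Rightarrow> (nat \<Rightarrow> real) \<Rightarrow> 'a \<Rightarrow> real" where
  "Lambda0 N N1 Delta Y B \<delta> \<omega> =
     (\<Sum>i=1..N1. \<delta> i * (Y i \<omega> + Delta i * B i \<omega>)) + (\<Sum>i=N1+1..N. \<delta> i * Y i \<omega>)"

definition Lambda1 :: "nat \<Rightarrow> nat \<Rightarrow> (nat \<Rightarrow> real) \<Rightarrow> (nat \<Rightarrow> 'a \<Rightarrow> real) \<Rightarrow> (nat \<Rightarrow> 'a \<Rightarrow> real)
    \<Rightarrow> (nat \<Rightarrow> real) \<Rightarrow> 'a \<Rightarrow> real" where
  "Lambda1 N N1 Delta Y B \<delta> \<omega> =
     (\<Sum>i=1..N1. \<delta> i * (Y i \<omega> - Delta i * B i \<omega>)) + (\<Sum>i=N1+1..N. \<delta> i * Y i \<omega>)"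

end

theory Submission
  imports Defs
begin


lemma gamma_nn:
  fixes s :: real assumes s: "s > 0"
  shows "(\<integral>\<^sup>+x. ennreal (indicator {0<..} x * x powr (s-1) * exp(-x/2)) \<partial>lborel) = ennreal (2 powr s * Gamma s)"
proof -
  let ?h = "\<lambda>x::real. ennreal (indicator {0<..} x * x powr (s-1) * exp(-x/2))"
  have hm: "?h \<in> borel_measurable borel" by measurable
  have "(\<integral>\<^sup>+x. ?h x \<partial>lborel) = ennreal \<bar>2\<bar> * (\<integral>\<^sup>+x. ?h (0 + 2 * x) \<partial>lborel)"
    using nn_integral_real_affine[OF hm, of 2 0] by simp
  also have "(\<lambda>x. ?h (0 + 2 * x)) = (\<lambda>x. ennreal (2 powr (s-1)) * ennreal (indicator {0..} x * x powr (s - 1) / exp x))"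
  proof
    fix x :: real
    show "?h (0 + 2 * x) = ennreal (2 powr (s-1)) * ennreal (indicator {0..} x * x powr (s - 1) / exp x)"
    proof (cases "x > 0")
      case True
      then show ?thesis by (simp add: powr_mult exp_minus field_simps ennreal_mult[symmetric] indicator_def)
    next
      case False
      then show ?thesis by (cases "x = 0") (auto simp: indicator_def)
    qed
  qed
  also have "(\<integral>\<^sup>+x. ennreal (2 powr (s-1)) * ennreal (indicator {0..} x * x powr (s - 1) / exp x) \<partial>lborel)
     = ennreal (2 powr (s-1)) * Gamma s"
    by (subst nn_integral_cmult) (auto simp: Gamma_conv_nn_integral_real[OF s])
  also have "ennreal \<bar>2\<bar> * (ennreal (2 powr (s-1)) * ennreal (Gamma s)) = ennreal (2 * (2 powr (s-1) * Gamma s))"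
    using s by (simp add: ennreal_mult Gamma_real_pos)
  also have "2 * (2 powr (s-1) * Gamma s) = 2 powr s * Gamma s"
    by (simp add: powr_diff)
  finally show ?thesis .
qed

lemma chi2_nonneg: "k > 0 \<Longrightarrow> chi2_density k x \<ge> 0"
  unfolding chi2_density_def by (auto intro!: divide_nonneg_pos mult_pos_pos Gamma_real_pos)

lemma chi2_mul_nonneg: "k > 0 \<Longrightarrow> 0 \<le> chi2_density k x * x"
proof (cases "x > 0")
  case True
  assume "k > 0" then show ?thesis using True by (intro mult_nonneg_nonneg chi2_nonneg) auto
next
  case False
  then show ?thesis by (simp add: chi2_density_def)
qed

lemma chi2_meas[measurable]: "chi2_density k \<in> borel_measurable borel"
  unfolding chi2_density_def by measurable

lemma chi2_moment_nn:
  assumes k: "k > 0"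
  shows "(\<integral>\<^sup>+x. ennreal (chi2_density k x * x^n) \<partial>lborel) = ennreal (2^n * Gamma (real k/2 + n) / Gamma (real k/2))"
proof -
  define a where "a = real k / 2"
  have a: "a > 0" using k by (simp add: a_def)
  have C: "2 powr a * Gamma a > 0" using a by (simp add: Gamma_real_pos)
  have pw: "ennreal (chi2_density k x * x^n) = ennreal (1 / (2 powr a * Gamma a)) *
      ennreal (indicator {0<..} x * x powr (a + real n - 1) * exp(-x/2))" for x
  proof (cases "x > 0")
    case True
    have "x powr (a + real n - 1) = x powr (a - 1) * x ^ n"
      using True by (simp add: powr_add[symmetric] powr_realpow[symmetric] algebra_simps)
    then show ?thesis using True C
      by (simp add: chi2_density_def a_def ennreal_mult[symmetric] indicator_def field_simps)
  next
    case False
    then show ?thesis by (simp add: chi2_density_def indicator_def)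
  qed
  have "(\<integral>\<^sup>+x. ennreal (chi2_density k x * x^n) \<partial>lborel) =
      ennreal (1 / (2 powr a * Gamma a)) * (\<integral>\<^sup>+x. ennreal (indicator {0<..} x * x powr (a + real n - 1) * exp(-x/2)) \<partial>lborel)"
    unfolding pw by (rule nn_integral_cmult) measurable
  also have "\<dots> = ennreal (1 / (2 powr a * Gamma a)) * ennreal (2 powr (a + real n) * Gamma (a + real n))"
    using gamma_nn[of "a + real n"] a by simp
  also have "\<dots> = ennreal (1 / (2 powr a * Gamma a) * (2 powr (a + real n) * Gamma (a + real n)))"
    apply (rule ennreal_mult[symmetric])
    using C a by (auto intro!: mult_nonneg_nonneg less_imp_le[OF Gamma_real_pos])
  also have "1 / (2 powr a * Gamma a) * (2 powr (a + real n) * Gamma (a + real n)) = 2^n * Gamma (a + n) / Gamma a"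
    using C by (simp add: powr_add powr_realpow field_simps)
  finally show ?thesis by (simp add: a_def)
qed

lemma chi2_moment:
  assumes k: "k > 0"
  shows "has_bochner_integral lborel (\<lambda>x. chi2_density k x * x^n) (2^n * Gamma (real k/2 + n) / Gamma (real k/2))"
  apply (rule has_bochner_integral_nn_integral)
  using k chi2_moment_nn[OF k, of n] by (auto intro!: AE_I2 mult_nonneg_nonneg chi2_nonneg Gamma_real_pos less_imp_le
     simp: chi2_density_def)

lemma half_notnp: "k > 0 \<Longrightarrow> real k / 2 + c \<notin> \<int>\<^sub>\<le>\<^sub>0" if "c \<ge> 0" for c
  using nonpos_Ints_nonpos[of "real k/2 + c"] that by auto

lemma chi2_m0: "k > 0 \<Longrightarrow> has_bochner_integral lborel (\<lambda>x. chi2_density k x) 1"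
proof -
  assume k: "k > 0"
  have "Gamma (real k/2) > 0" using k by (simp add: Gamma_real_pos)
  then show ?thesis using chi2_moment[OF k, of 0] by simp
qed

lemma chi2_m1: "k > 0 \<Longrightarrow> has_bochner_integral lborel (\<lambda>x. chi2_density k x * x) (real k)"
proof -
  assume k: "k > 0"
  have "Gamma (real k/2) > 0" using k by (simp add: Gamma_real_pos)
  moreover have "Gamma (real k/2 + 1) = real k / 2 * Gamma (real k/2)"
    using Gamma_plus1[of "real k/2"] half_notnp[OF _ k, of 0] by simp
  ultimately have eq: "2^1 * Gamma (real k/2 + real 1) / Gamma (real k/2) = real k" by (simp add: field_simps)
  show ?thesis using chi2_moment[OF k, of 1] by (simp only: eq, simp)
qed

lemma chi2_m2: "k > 0 \<Longrightarrow> has_bochner_integral lborel (\<lambda>x. chi2_density k x * x^2) (real k * (real k + 2))"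
proof -
  assume k: "k > 0"
  have "Gamma (real k/2 + 2) = (real k/2 + 1) * (real k / 2) * Gamma (real k/2)"
    using Gamma_plus1[of "real k/2 + 1"] Gamma_plus1[of "real k/2"] half_notnp[OF _ k, of 0] half_notnp[OF _ k, of 1]
    by (simp add: add.assoc)
  moreover have "Gamma (real k/2) > 0" using k by (simp add: Gamma_real_pos)
  ultimately have eq: "2^2 * Gamma (real k/2 + real 2) / Gamma (real k/2) = real k * (real k + 2)" by (simp add: field_simps)
  show ?thesis using chi2_moment[OF k, of 2] by (subst eq[symmetric])
qed

lemma chi2_step:
  assumes k: "k > 0" and x: "x > 0"
  shows "chi2_density (k + 2) x = chi2_density k x * x / real k"
proof -
  have g: "Gamma (real k/2 + 1) = real k / 2 * Gamma (real k/2)"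
    using Gamma_plus1[of "real k/2"] half_notnp[OF _ k, of 0] by simp
  have gp: "Gamma (real k/2) > 0" using k by (simp add: Gamma_real_pos)
  have e1: "real (k+2) / 2 - 1 = (real k / 2 - 1) + 1" by (simp add: field_simps)
  have e2: "real (k+2) / 2 = real k / 2 + 1" by (simp add: field_simps)
  have "x powr (real (k+2) / 2 - 1) = x powr (real k / 2 - 1) * x"
    by (subst e1, subst powr_add) (use x in simp)
  moreover have "2 powr (real (k+2) / 2) = 2 powr (real k / 2) * 2"
    unfolding e2 by (simp add: powr_add)
  moreover have "Gamma (real (k+2) / 2) = real k / 2 * Gamma (real k/2)"
    unfolding e2 g ..
  ultimately show ?thesis using x k gp
    unfolding chi2_density_def by (simp add: field_simps)
qed

definition poisw :: "real \<Rightarrow> nat \<Rightarrow> real" where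
  "poisw eta j = exp (- eta / 2) * (eta / 2) ^ j / fact j"

lemma poisw_nonneg: "eta \<ge> 0 \<Longrightarrow> poisw eta j \<ge> 0"
  unfolding poisw_def by simp

lemma ncchi2_alt: "ncchi2_density k eta x = (\<Sum>j. poisw eta j * chi2_density (k + 2 * j) x)"
  unfolding ncchi2_density_def poisw_def ..

lemma ncchi2_summable:
  assumes k: "k > 0" and eta: "eta \<ge> 0"
  shows "summable (\<lambda>j. poisw eta j * chi2_density (k + 2 * j) x)"
proof (cases "x > 0")
  case False
  then show ?thesis by (simp add: chi2_density_def)
next
  case x: True
  define N where "N = nat \<lceil>eta * x\<rceil>"
  show ?thesis
  proof (rule summable_ratio_test[of "1/2" N])
    fix n assume n: "n \<ge> N"
    have kn: "k + 2 * n > 0" using k by simp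
    have st: "chi2_density (k + 2 * Suc n) x = chi2_density (k + 2 * n) x * x / real (k + 2 * n)"
      using chi2_step[OF kn x] by (simp add: add.assoc)
    have pw: "poisw eta (Suc n) = poisw eta n * (eta / 2) / real (Suc n)"
      unfolding poisw_def by (simp add: field_simps)
    have c0: "chi2_density (k + 2 * n) x \<ge> 0" by (rule chi2_nonneg) (use kn in simp)
    have p0: "poisw eta n \<ge> 0" by (rule poisw_nonneg[OF eta])
    have nb: "eta * x \<le> real n" using n unfolding N_def by linarith
    have rat: "(eta / 2) / real (Suc n) * (x / real (k + 2 * n)) \<le> 1/2"
    proof -
      have "eta * x \<le> real (Suc n) * real (k + 2 * n)"
      proof -
        have h1: "(1::real) \<le> real (k + 2 * n)"
        proof -
          have "1 \<le> k + 2 * n" using kn by linarith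
          then show ?thesis by (metis of_nat_1 of_nat_le_iff)
        qed
        have "real (Suc n) * 1 \<le> real (Suc n) * real (k + 2 * n)"
          by (rule mult_left_mono[OF h1]) simp
        then have "real (Suc n) \<le> real (Suc n) * real (k + 2 * n)" by (simp only: mult_1_right)
        then show ?thesis using nb by (simp only: of_nat_Suc)
      qed
      note le = this
      have P: "0 < real (Suc n) * real (k + 2 * n)" using kn by (intro mult_pos_pos) (simp_all only: of_nat_0_less_iff zero_less_Suc)
      have "eta * x / (real (Suc n) * real (k + 2 * n)) \<le> 1"
        using le P by (simp only: pos_divide_le_eq[OF P] mult_1_left)
      moreover have "(eta / 2) / real (Suc n) * (x / real (k + 2 * n)) = (eta * x / (real (Suc n) * real (k + 2 * n))) / 2"
        by simp
      ultimately show ?thesis by (simp only: divide_right_mono[of _ 1 2])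
    qed
    have "poisw eta (Suc n) * chi2_density (k + 2 * Suc n) x =
       (poisw eta n * chi2_density (k + 2 * n) x) * ((eta / 2) / real (Suc n) * (x / real (k + 2 * n)))"
      unfolding st pw by (simp add: field_simps)
    also have "\<dots> \<le> (poisw eta n * chi2_density (k + 2 * n) x) * (1/2)"
      by (rule mult_left_mono[OF rat]) (use c0 p0 in simp)
    finally show "norm (poisw eta (Suc n) * chi2_density (k + 2 * Suc n) x) \<le> 1/2 * norm (poisw eta n * chi2_density (k + 2 * n) x)"
      using c0 p0 eta x by (simp add: poisw_nonneg chi2_nonneg mult.commute kn)
  qed simp
qed

lemma poisw_sums1: "(\<lambda>j. poisw eta j) sums 1"
proof -
  have e: "(\<lambda>n. (eta/2)^n /\<^sub>R fact n) = (\<lambda>n. (eta/2)^n / fact n)"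
    by (simp add: field_simps)
  have "(\<lambda>j. exp (- eta / 2) * ((eta/2)^j / fact j)) sums (exp (- eta / 2) * exp (eta/2))"
    by (rule sums_mult) (use exp_converges[of "eta/2"] in \<open>unfold e\<close>)
  moreover have "exp (- eta / 2) * exp (eta / 2) = 1" by (simp add: exp_minus field_simps)
  ultimately have "(\<lambda>j. exp (- eta / 2) * ((eta/2)^j / fact j)) sums 1" by simp
  then show ?thesis unfolding poisw_def by (simp only: times_divide_eq_right)
qed

lemma poisw_sumsj: "(\<lambda>j. poisw eta j * real j) sums (eta / 2)"
proof -
  have "(\<lambda>j. (eta/2) * poisw eta j) sums ((eta/2) * 1)"
    by (rule sums_mult[OF poisw_sums1])
  moreover have "(\<lambda>j. poisw eta (Suc j) * real (Suc j)) = (\<lambda>j. (eta/2) * poisw eta j)"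
  proof
    fix j
    have f: "(fact (Suc j) :: real) = real (Suc j) * fact j" by (rule fact_Suc)
    have "(fact j :: real) > 0" by simp
    then show "poisw eta (Suc j) * real (Suc j) = (eta/2) * poisw eta j"
      unfolding poisw_def f by (simp add: field_simps del: of_nat_Suc)
  qed
  ultimately have "(\<lambda>j. poisw eta (Suc j) * real (Suc j)) sums (eta/2)" by simp
  then show ?thesis using sums_Suc_iff[of "\<lambda>j. poisw eta j * real j" "eta/2"] by simp
qed

lemma ncchi2_m1_nn:
  assumes k: "k > 0" and eta: "eta \<ge> 0"
  shows "(\<integral>\<^sup>+x. ennreal (ncchi2_density k eta x * x) \<partial>lborel) = ennreal (real k + eta)"
proof -
  have kj: "k + 2 * j > 0" for j using k by simp
  have pt: "ennreal (ncchi2_density k eta x * x) = (\<Sum>j. ennreal (poisw eta j * (chi2_density (k + 2 * j) x * x)))" for x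
  proof -
    have S0: "(\<lambda>j. poisw eta j * chi2_density (k + 2 * j) x * x) sums (ncchi2_density k eta x * x)"
      unfolding ncchi2_alt by (rule sums_mult2) (rule summable_sums[OF ncchi2_summable[OF k eta]])
    then have S: "(\<lambda>j. poisw eta j * (chi2_density (k + 2 * j) x * x)) sums (ncchi2_density k eta x * x)"
      by (simp add: mult.assoc)
    moreover have nn: "0 \<le> poisw eta j * (chi2_density (k + 2 * j) x * x)" for j
    proof (cases "x > 0")
      case True
      then show ?thesis by (intro mult_nonneg_nonneg poisw_nonneg[OF eta] chi2_nonneg[OF kj]) simp
    next
      case False
      then show ?thesis by (simp add: chi2_density_def)
    qed
    have nz: "0 \<le> ncchi2_density k eta x * x"
      by (rule sums_le[OF _ sums_zero S]) (use nn in simp)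
    have "(\<lambda>j. ennreal (poisw eta j * (chi2_density (k + 2 * j) x * x))) sums ennreal (ncchi2_density k eta x * x)"
      using S nn nz by (subst sums_ennreal) auto
    then show ?thesis by (simp add: sums_iff)
  qed
  have "(\<integral>\<^sup>+x. ennreal (ncchi2_density k eta x * x) \<partial>lborel) =
      (\<Sum>j. \<integral>\<^sup>+x. ennreal (poisw eta j * (chi2_density (k + 2 * j) x * x)) \<partial>lborel)"
    unfolding pt by (rule nn_integral_suminf) measurable
  also have "\<dots> = (\<Sum>j. ennreal (poisw eta j * (real k + 2 * real j)))"
  proof (rule suminf_cong)
    fix j
    have "(\<integral>\<^sup>+x. ennreal (poisw eta j * (chi2_density (k + 2 * j) x * x)) \<partial>lborel) =
        (\<integral>\<^sup>+x. ennreal (poisw eta j) * ennreal (chi2_density (k + 2 * j) x * x) \<partial>lborel)"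
      by (rule nn_integral_cong) (simp add: ennreal_mult' poisw_nonneg[OF eta])
    also have "\<dots> = ennreal (poisw eta j) * (\<integral>\<^sup>+x. ennreal (chi2_density (k + 2 * j) x * x) \<partial>lborel)"
      by (rule nn_integral_cmult) measurable
    also have "(\<integral>\<^sup>+x. ennreal (chi2_density (k + 2 * j) x * x) \<partial>lborel) = ennreal (real k + 2 * real j)"
      using chi2_m1[OF kj[of j]] 
      by (subst nn_integral_eq_integral) (auto simp: has_bochner_integral_iff intro!: AE_I2 chi2_mul_nonneg[OF kj])
    finally show "(\<integral>\<^sup>+x. ennreal (poisw eta j * (chi2_density (k + 2 * j) x * x)) \<partial>lborel) = ennreal (poisw eta j * (real k + 2 * real j))"
      by (simp add: ennreal_mult' poisw_nonneg[OF eta])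
  qed
  also have "\<dots> = ennreal (real k + eta)"
  proof -
    have "(\<lambda>j. poisw eta j * real k + 2 * (poisw eta j * real j)) sums (1 * real k + 2 * (eta/2))"
      by (intro sums_add sums_mult sums_mult2 poisw_sums1 poisw_sumsj)
    then have "(\<lambda>j. poisw eta j * (real k + 2 * real j)) sums (real k + eta)"
      by (simp add: algebra_simps)
    then have "(\<lambda>j. ennreal (poisw eta j * (real k + 2 * real j))) sums ennreal (real k + eta)"
      using eta by (subst sums_ennreal) (auto intro!: mult_nonneg_nonneg poisw_nonneg)
    then show ?thesis by (simp add: sums_iff)
  qed
  finally show ?thesis .
qed

lemma ncchi2_m1:
  assumes k: "k > 0" and eta: "eta \<ge> 0"
  shows "has_bochner_integral lborel (\<lambda>x. ncchi2_density k eta x * x) (real k + eta)"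
proof (rule has_bochner_integral_nn_integral)
  show "(\<lambda>x. ncchi2_density k eta x * x) \<in> borel_measurable lborel"
    unfolding ncchi2_alt by measurable
  show "AE x in lborel. 0 \<le> ncchi2_density k eta x * x"
  proof (rule AE_I2)
    fix x
    have "0 \<le> ncchi2_density k eta x" unfolding ncchi2_alt
      using k eta by (intro suminf_nonneg ncchi2_summable) (auto intro!: mult_nonneg_nonneg poisw_nonneg chi2_nonneg)
    then show "0 \<le> ncchi2_density k eta x * x"
      by (cases "x > 0") (auto simp: ncchi2_alt chi2_density_def)
  qed
qed (use ncchi2_m1_nn[OF assms] eta in auto)





lemma dist_moment:
  assumes D: "distributed M lborel X (\<lambda>x. ennreal (f x))" and f0: "\<And>x. 0 \<le> f x"
    and g: "g \<in> borel_measurable borel"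
    and H: "has_bochner_integral lborel (\<lambda>x. f x * g x) v"
  shows "has_bochner_integral M (\<lambda>\<omega>. g (X \<omega>)) v"
proof -
  have gm: "g \<in> borel_measurable lborel" using g by simp
  have i: "integrable lborel (\<lambda>x. f x * g x)" and e: "integral\<^sup>L lborel (\<lambda>x. f x * g x) = v"
    using H by (auto simp: has_bochner_integral_iff)
  show ?thesis unfolding has_bochner_integral_iff
    using distributed_integrable[OF D gm] distributed_integral[OF D gm] f0 i e by auto
qed

lemma Y_H0:
  assumes D: "distributed M lborel (\<lambda>\<omega>. Y \<omega> / s^2) (\<lambda>x. ennreal (chi2_density k x))"
    and s: "s > 0" and k: "k > 0"
  shows "has_bochner_integral M Y (real k * s^2)"
    and "has_bochner_integral M (\<lambda>\<omega>. (Y \<omega>)^2) (real k * (real k + 2) * s^4)"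
proof -
  have f0: "\<And>x. 0 \<le> chi2_density k x" using chi2_nonneg[OF k] .
  have "has_bochner_integral lborel (\<lambda>x. chi2_density k x * (s^2 * x)) (s^2 * real k)"
    using has_bochner_integral_mult_right[OF chi2_m1[OF k], of "s^2"] by (simp add: ac_simps)
  from dist_moment[OF D f0 _ this] have "has_bochner_integral M (\<lambda>\<omega>. s^2 * (Y \<omega> / s^2)) (s^2 * real k)"
    by simp
  then show "has_bochner_integral M Y (real k * s^2)" using s by (simp add: ac_simps)
  have "has_bochner_integral lborel (\<lambda>x. chi2_density k x * (s^2 * x)^2) (s^4 * (real k * (real k + 2)))"
    using has_bochner_integral_mult_right[OF chi2_m2[OF k], of "s^4"] by (simp add: ac_simps power_mult_distrib flip: power_mult)
  from dist_moment[OF D f0 _ this] have "has_bochner_integral M (\<lambda>\<omega>. (s^2 * (Y \<omega> / s^2))^2) (s^4 * (real k * (real k + 2)))"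
    by simp
  then show "has_bochner_integral M (\<lambda>\<omega>. (Y \<omega>)^2) (real k * (real k + 2) * s^4)" using s by (simp add: ac_simps)
qed

lemma Y_H1:
  assumes D: "distributed M lborel (\<lambda>\<omega>. Y \<omega> / s^2) (\<lambda>x. ennreal (ncchi2_density k eta x))"
    and s: "s > 0" and k: "k > 0" and eta: "eta \<ge> 0"
  shows "has_bochner_integral M Y ((real k + eta) * s^2)"
proof -
  have f0: "\<And>x. 0 \<le> ncchi2_density k eta x"
    unfolding ncchi2_alt
    using k eta by (intro suminf_nonneg ncchi2_summable) (auto intro!: mult_nonneg_nonneg poisw_nonneg chi2_nonneg)
  have "has_bochner_integral lborel (\<lambda>x. ncchi2_density k eta x * (s^2 * x)) (s^2 * (real k + eta))"
    using has_bochner_integral_mult_right[OF ncchi2_m1[OF k eta], of "s^2"] by (simp add: ac_simps)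
  from dist_moment[OF D f0 _ this] have "has_bochner_integral M (\<lambda>\<omega>. s^2 * (Y \<omega> / s^2)) (s^2 * (real k + eta))"
    by simp
  then show ?thesis using s by (simp add: ac_simps)
qed


lemma dsum_if:
  fixes c m q :: "'i \<Rightarrow> real"
  assumes "finite I"
  shows "(\<Sum>j\<in>I. \<Sum>k\<in>I. c j * c k * (if j = k then q j else m j * m k))
     = (\<Sum>j\<in>I. c j * m j)^2 + (\<Sum>j\<in>I. (c j)^2 * (q j - (m j)^2))"
proof -
  have "(\<Sum>j\<in>I. \<Sum>k\<in>I. c j * c k * (if j = k then q j else m j * m k))
      = (\<Sum>j\<in>I. \<Sum>k\<in>I. (c j * m j) * (c k * m k) + (if j = k then (c j)^2 * (q j - (m j)^2) else 0))"
    by (intro sum.cong refl) (auto simp: power2_eq_square algebra_simps)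
  also have "\<dots> = (\<Sum>j\<in>I. \<Sum>k\<in>I. (c j * m j) * (c k * m k)) + (\<Sum>j\<in>I. (c j)^2 * (q j - (m j)^2))"
    using assms by (simp add: sum.distrib)
  also have "(\<Sum>j\<in>I. \<Sum>k\<in>I. (c j * m j) * (c k * m k)) = (\<Sum>j\<in>I. c j * m j)^2"
    by (simp add: power2_eq_square sum_product)
  finally show ?thesis .
qed

context prob_space
begin

lemma lin_comb_mean:
  fixes X :: "'i \<Rightarrow> 'a \<Rightarrow> real"
  assumes m: "\<And>j. j\<in>I \<Longrightarrow> has_bochner_integral M (X j) (m j)"
  shows "has_bochner_integral M (\<lambda>\<omega>. \<Sum>j\<in>I. c j * X j \<omega>) (\<Sum>j\<in>I. c j * m j)"
  by (intro has_bochner_integral_sum has_bochner_integral_mult_right m)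

lemma lin_comb_var:
  fixes X :: "'i \<Rightarrow> 'a \<Rightarrow> real"
  assumes fin: "finite I" and ind: "indep_vars (\<lambda>_. borel) X I"
   and m: "\<And>j. j\<in>I \<Longrightarrow> has_bochner_integral M (X j) (m j)"
   and q: "\<And>j. j\<in>I \<Longrightarrow> has_bochner_integral M (\<lambda>\<omega>. (X j \<omega>)^2) (q j)"
  shows "has_bochner_integral M (\<lambda>\<omega>. ((\<Sum>j\<in>I. c j * X j \<omega>) - (\<Sum>j\<in>I. c j * m j))^2)
           (\<Sum>j\<in>I. (c j)^2 * (q j - (m j)^2))"
proof -
  define mu where "mu = (\<Sum>j\<in>I. c j * m j)"
  have prod: "has_bochner_integral M (\<lambda>\<omega>. X j \<omega> * X k \<omega>) (if j = k then q j else m j * m k)"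
    if j: "j \<in> I" and k: "k \<in> I" for j k
  proof (cases "j = k")
    case True
    then show ?thesis using q[OF j] by (simp add: power2_eq_square)
  next
    case False
    have ind2: "indep_vars (\<lambda>_. borel) X {j, k}"
      by (rule indep_vars_subset[OF ind]) (use j k in auto)
    have int: "\<And>i. i \<in> {j, k} \<Longrightarrow> integrable M (X i)" using m j k by (auto simp: has_bochner_integral_iff)
    have "integrable M (\<lambda>\<omega>. \<Prod>i\<in>{j,k}. X i \<omega>)"
      by (rule indep_vars_integrable[OF _ ind2 int]) auto
    moreover have "(\<integral>\<omega>. (\<Prod>i\<in>{j,k}. X i \<omega>) \<partial>M) = (\<Prod>i\<in>{j,k}. \<integral>\<omega>. X i \<omega> \<partial>M)"
      by (rule indep_vars_lebesgue_integral[OF _ ind2 int]) auto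
    ultimately show ?thesis using False m[OF j] m[OF k]
      by (simp add: has_bochner_integral_iff)
  qed
  have A: "has_bochner_integral M (\<lambda>\<omega>. \<Sum>j\<in>I. \<Sum>k\<in>I. c j * c k * (X j \<omega> * X k \<omega>))
      (\<Sum>j\<in>I. \<Sum>k\<in>I. c j * c k * (if j = k then q j else m j * m k))"
    by (intro has_bochner_integral_sum has_bochner_integral_mult_right prod)
  have Bm: "has_bochner_integral M (\<lambda>\<omega>. 2 * mu * (\<Sum>j\<in>I. c j * X j \<omega>)) (2 * mu * mu)"
    unfolding mu_def by (intro has_bochner_integral_mult_right lin_comb_mean m)
  have C: "has_bochner_integral M (\<lambda>\<omega>. mu^2) (mu^2)"
    by (simp add: has_bochner_integral_iff prob_space)
  have "has_bochner_integral M (\<lambda>\<omega>. (\<Sum>j\<in>I. \<Sum>k\<in>I. c j * c k * (X j \<omega> * X k \<omega>)) - 2 * mu * (\<Sum>j\<in>I. c j * X j \<omega>) + mu^2)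
      ((\<Sum>j\<in>I. \<Sum>k\<in>I. c j * c k * (if j = k then q j else m j * m k)) - 2 * mu * mu + mu^2)"
    by (intro has_bochner_integral_add has_bochner_integral_diff A Bm C)
  moreover have "(\<Sum>j\<in>I. \<Sum>k\<in>I. c j * c k * (X j \<omega> * X k \<omega>)) - 2 * mu * (\<Sum>j\<in>I. c j * X j \<omega>) + mu^2
      = ((\<Sum>j\<in>I. c j * X j \<omega>) - mu)^2" for \<omega>
  proof -
    have "(\<Sum>j\<in>I. \<Sum>k\<in>I. c j * c k * (X j \<omega> * X k \<omega>)) = (\<Sum>j\<in>I. c j * X j \<omega>)^2"
      by (simp add: power2_eq_square sum_product ac_simps)
    then show ?thesis by (simp add: power2_eq_square algebra_simps)
  qed
  moreover have "(\<Sum>j\<in>I. \<Sum>k\<in>I. c j * c k * (if j = k then q j else m j * m k)) - 2 * mu * mu + mu^2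
      = (\<Sum>j\<in>I. (c j)^2 * (q j - (m j)^2))"
    using dsum_if[OF fin, of c q m] unfolding mu_def by (simp add: power2_eq_square)
  ultimately show ?thesis unfolding mu_def by simp
qed

end




lemma B_mom:
  assumes P: "prob_space M" and Bm: "B \<in> borel_measurable M"
    and B01: "\<forall>\<omega>\<in>space M. B \<omega> \<in> {0, 1}" and Bp: "measure M {\<omega> \<in> space M. B \<omega> = 1} = p"
  shows "has_bochner_integral M B p" and "has_bochner_integral M (\<lambda>\<omega>. (B \<omega>)^2) p"
proof -
  interpret prob_space M by (rule P)
  define A where "A = {\<omega> \<in> space M. B \<omega> = 1}"
  have A: "A \<in> sets M" unfolding A_def using Bm by measurable
  have hi: "has_bochner_integral M (indicator A) p"
    using has_bochner_integral_real_indicator[OF A] Bp unfolding A_def by (simp add: emeasure_eq_measure)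
  show "has_bochner_integral M B p"
    using hi by (subst has_bochner_integral_cong[OF refl _ refl, where g="indicator A"])
      (use B01 in \<open>auto simp: A_def indicator_def\<close>)
  show "has_bochner_integral M (\<lambda>\<omega>. (B \<omega>)^2) p"
    using hi by (subst has_bochner_integral_cong[OF refl _ refl, where g="indicator A"])
      (use B01 in \<open>auto simp: A_def indicator_def\<close>)
qed

lemma opt_ineq:
  fixes a v d :: "nat \<Rightarrow> real"
  assumes fin: "finite A" and v: "\<And>i. i \<in> A \<Longrightarrow> v i > 0"
    and V: "(\<Sum>i\<in>A. (d i)^2 * v i) > 0"
  shows "(\<Sum>i\<in>A. d i * a i)^2 / (\<Sum>i\<in>A. (d i)^2 * v i) \<le> (\<Sum>i\<in>A. (a i)^2 / v i)"
proof -
  define D where "D = (\<Sum>i\<in>A. d i * a i)"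
  define W where "W = (\<Sum>i\<in>A. (d i)^2 * v i)"
  define Q where "Q = (\<Sum>i\<in>A. (a i)^2 / v i)"
  have Q0: "Q \<ge> 0" unfolding Q_def using v by (intro sum_nonneg) (auto intro!: divide_nonneg_pos)
  have "0 \<le> (\<Sum>i\<in>A. v i * (d i * Q - D * a i / v i)^2)"
    using v by (intro sum_nonneg mult_nonneg_nonneg) (auto simp: less_imp_le)
  also have "\<dots> = (\<Sum>i\<in>A. (d i)^2 * v i * Q^2 - 2 * Q * D * (d i * a i) + D^2 * ((a i)^2 / v i))"
  proof (intro sum.cong refl)
    fix i assume "i \<in> A"
    then have "v i \<noteq> 0" using v by fastforce
    then show "v i * (d i * Q - D * a i / v i)^2 = (d i)^2 * v i * Q^2 - 2 * Q * D * (d i * a i) + D^2 * ((a i)^2 / v i)"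
      by (simp add: power2_eq_square field_simps)
  qed
  also have "\<dots> = W * Q^2 - 2 * Q * D * D + D^2 * Q"
  proof -
    have e1: "(\<Sum>i\<in>A. (d i)^2 * v i * Q^2) = W * Q^2" unfolding W_def by (simp add: sum_distrib_right)
    have e2: "(\<Sum>i\<in>A. 2 * Q * D * (d i * a i)) = 2 * Q * D * D" unfolding D_def[symmetric] 
      by (simp add: sum_distrib_left[symmetric] D_def)
    have e3: "(\<Sum>i\<in>A. D^2 * ((a i)^2 / v i)) = D^2 * Q" unfolding Q_def by (simp add: sum_distrib_left)
    show ?thesis by (simp only: sum.distrib sum_subtractf e1 e2 e3)
  qed
  also have "\<dots> = Q * (W * Q - D^2)" by (simp add: power2_eq_square algebra_simps)
  finally have *: "0 \<le> Q * (W * Q - D^2)" .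
  have "D^2 \<le> W * Q"
  proof (cases "Q = 0")
    case True
    then have "\<forall>i\<in>A. (a i)^2 / v i = 0" using Q_def fin v
      by (subst sum_nonneg_eq_0_iff[symmetric]) (auto intro!: divide_nonneg_pos)
    then have "\<forall>i\<in>A. a i = 0" using v by fastforce
    then have "D = 0" unfolding D_def by simp
    then show ?thesis using True by simp
  next
    case False
    then have "Q > 0" using Q0 by simp
    then show ?thesis using * by (simp add: zero_le_mult_iff)
  qed
  then show ?thesis using V unfolding D_def[symmetric] W_def[symmetric] Q_def[symmetric]
    by (simp add: divide_le_eq ac_simps)
qed

lemma opt_eq:
  fixes a v :: "nat \<Rightarrow> real"
  assumes fin: "finite A" and v: "\<And>i. i \<in> A \<Longrightarrow> v i > 0"
    and S: "(\<Sum>i\<in>A. a i / v i) \<noteq> 0"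
  shows "(\<Sum>i\<in>A. (a i / v i / (\<Sum>i\<in>A. a i / v i)) * a i)^2 / (\<Sum>i\<in>A. (a i / v i / (\<Sum>i\<in>A. a i / v i))^2 * v i)
     = (\<Sum>i\<in>A. (a i)^2 / v i)"
proof -
  define S where "S = (\<Sum>i\<in>A. a i / v i)"
  define Q where "Q = (\<Sum>i\<in>A. (a i)^2 / v i)"
  have 1: "(\<Sum>i\<in>A. (a i / v i / S) * a i) = Q / S"
    unfolding Q_def by (simp add: sum_divide_distrib power2_eq_square)
  have 2: "(\<Sum>i\<in>A. (a i / v i / S)^2 * v i) = Q / S^2"
    unfolding Q_def sum_divide_distrib using v
    by (intro sum.cong refl) (auto simp: power2_eq_square field_simps dest: less_imp_neq[symmetric])
  have "Q \<noteq> 0"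
  proof
    assume "Q = 0"
    then have "\<forall>i\<in>A. (a i)^2 / v i = 0" using Q_def fin v
      by (subst sum_nonneg_eq_0_iff[symmetric]) (auto intro!: divide_nonneg_pos)
    then have "\<forall>i\<in>A. a i = 0" using v by fastforce
    then have "S = 0" unfolding S_def by simp
    then show False using S S_def by simp
  qed
  then show ?thesis using S unfolding S_def[symmetric] Q_def[symmetric] 1 2
    by (simp add: power2_eq_square field_simps)
qed




theorem lemma4:
  fixes M0 M1 :: "'a measure"
    and N N1 M :: nat
    and sigma eta P Delta :: "nat \<Rightarrow> real"
    and Y B :: "nat \<Rightarrow> 'a \<Rightarrow> real"
  assumes "prob_space M0" and "prob_space M1"
    and "N1 \<le> N" and "M > 0"
    and sigma_pos: "\<And>i. i \<in> {1..N} \<Longrightarrow> sigma i > 0"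
    and eta_nonneg: "\<And>i. i \<in> {1..N} \<Longrightarrow> eta i \<ge> 0"
    and P_range: "\<And>i. i \<in> {1..N1} \<Longrightarrow> 0 \<le> P i \<and> P i \<le> 1"
    and H0_chi2: "\<And>i. i \<in> {1..N} \<Longrightarrow>
          distributed M0 lborel (\<lambda>\<omega>. Y i \<omega> / (sigma i)^2) (\<lambda>x. ennreal (chi2_density M x))"
    and H1_ncchi2: "\<And>i. i \<in> {1..N} \<Longrightarrow>
          distributed M1 lborel (\<lambda>\<omega>. Y i \<omega> / (sigma i)^2) (\<lambda>x. ennreal (ncchi2_density M (eta i) x))"
    and B0_01: "\<And>i. i \<in> {1..N1} \<Longrightarrow> \<forall>\<omega>\<in>space M0. B i \<omega> \<in> {0, 1}"
    and B1_01: "\<And>i. i \<in> {1..N1} \<Longrightarrow> \<forall>\<omega>\<in>space M1. B i \<omega> \<in> {0, 1}"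
    and B0_prob: "\<And>i. i \<in> {1..N1} \<Longrightarrow> measure M0 {\<omega> \<in> space M0. B i \<omega> = 1} = P i"
    and B1_prob: "\<And>i. i \<in> {1..N1} \<Longrightarrow> measure M1 {\<omega> \<in> space M1. B i \<omega> = 1} = P i"
    and indep0: "prob_space.indep_vars M0 (\<lambda>_. borel) (case_sum Y B) (Inl ` {1..N} \<union> Inr ` {1..N1})"
    and indep1: "prob_space.indep_vars M1 (\<lambda>_. borel) (case_sum Y B) (Inl ` {1..N} \<union> Inr ` {1..N1})"
  defines "wB \<equiv> \<lambda>i. (eta i * (sigma i)^2 - 2 * P i * Delta i) /
                       ((Delta i)^2 * P i * (1 - P i) + 2 * real M * (sigma i)^4)"
    and "wH \<equiv> \<lambda>i. eta i / (2 * real M * (sigma i)^2)"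
  defines "S \<equiv> (\<Sum>i=1..N1. wB i) + (\<Sum>i=N1+1..N. wH i)"
  defines "\<delta>opt \<equiv> \<lambda>i. if i \<le> N1 then wB i / S else wH i / S"
  assumes S_nz: "S \<noteq> 0"
  shows "(\<Sum>i=1..N. \<delta>opt i) = 1 \<and>
         (\<forall>\<delta> :: nat \<Rightarrow> real. (\<Sum>i=1..N. \<delta> i) = 1 \<longrightarrow>
            deflection M0 M1 (Lambda0 N N1 Delta Y B \<delta>) (Lambda1 N N1 Delta Y B \<delta>)
              \<le> deflection M0 M1 (Lambda0 N N1 Delta Y B \<delta>opt) (Lambda1 N N1 Delta Y B \<delta>opt))"
  proof -
  interpret p0: prob_space M0 by fact
  interpret p1: prob_space M1 by fact
  note N1N = \<open>N1 \<le> N\<close>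
  have Mpos: "real M > 0" using \<open>M > 0\<close> by simp
  have split: "\<And>f::nat\<Rightarrow>real. (\<Sum>i=1..N. f i) = (\<Sum>i=1..N1. f i) + (\<Sum>i=N1+1..N. f i)"
    using sum.ub_add_nat[of 1 N1 _ "N - N1"] N1N by simp
  have ifsum: "\<And>f::nat\<Rightarrow>real. (\<Sum>i=1..N. if i \<le> N1 then f i else 0) = (\<Sum>i=1..N1. f i)"
  proof -
    fix f :: "nat \<Rightarrow> real"
    have "(\<Sum>i=1..N. if i \<le> N1 then f i else 0) = (\<Sum>i=1..N1. if i \<le> N1 then f i else 0) + (\<Sum>i=N1+1..N. if i \<le> N1 then f i else 0)"
      by (rule split)
    also have "(\<Sum>i=1..N1. if i \<le> N1 then f i else 0) = (\<Sum>i=1..N1. f i)" by (rule sum.cong) auto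
    also have "(\<Sum>i=N1+1..N. if i \<le> N1 then f i else 0) = 0" by (rule sum.neutral) auto
    finally show "(\<Sum>i=1..N. if i \<le> N1 then f i else 0) = (\<Sum>i=1..N1. f i)" by simp
  qed
  define I where "I = Inl ` {1..N} \<union> Inr ` {1..N1}"
  define X where "X = case_sum Y B"
  have finI: "finite I" unfolding I_def by simp
  have sumI: "\<And>g::nat+nat \<Rightarrow> real. (\<Sum>j\<in>I. g j) = (\<Sum>i=1..N. g (Inl i)) + (\<Sum>i=1..N1. g (Inr i))"
  proof -
    fix g :: "nat+nat \<Rightarrow> real"
    have "(\<Sum>j\<in>I. g j) = (\<Sum>j\<in>Inl ` {1..N}. g j) + (\<Sum>j\<in>Inr ` {1..N1}. g j)"
      unfolding I_def by (rule sum.union_disjoint) auto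
    also have "(\<Sum>j\<in>Inl ` {1..N}. g j) = (\<Sum>i=1..N. g (Inl i))"
      by (subst sum.reindex) auto
    also have "(\<Sum>j\<in>Inr ` {1..N1}. g j) = (\<Sum>i=1..N1. g (Inr i))"
      by (subst sum.reindex) auto
    finally show "(\<Sum>j\<in>I. g j) = (\<Sum>i=1..N. g (Inl i)) + (\<Sum>i=1..N1. g (Inr i))" .
  qed
  have rv0: "\<And>j. j \<in> I \<Longrightarrow> X j \<in> borel_measurable M0"
    using indep0 unfolding p0.indep_vars_def I_def X_def[symmetric] by blast
  have rv1: "\<And>j. j \<in> I \<Longrightarrow> X j \<in> borel_measurable M1"
    using indep1 unfolding p1.indep_vars_def I_def X_def[symmetric] by blast
  define m0 where "m0 = case_sum (\<lambda>i. real M * (sigma i)^2) (\<lambda>i. P i)"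
  define q0 where "q0 = case_sum (\<lambda>i. real M * (real M + 2) * (sigma i)^4) (\<lambda>i. P i)"
  define m1 where "m1 = case_sum (\<lambda>i. (real M + eta i) * (sigma i)^2) (\<lambda>i. P i)"
  have hm0: "\<And>j. j \<in> I \<Longrightarrow> has_bochner_integral M0 (X j) (m0 j)"
  proof -
    fix j assume j: "j \<in> I"
    show "has_bochner_integral M0 (X j) (m0 j)"
    proof (cases j)
      case (Inl i)
      then have i: "i \<in> {1..N}" using j unfolding I_def by auto
      show ?thesis using Y_H0(1)[OF H0_chi2[OF i] sigma_pos[OF i] \<open>M > 0\<close>] Inl
        by (simp add: X_def m0_def)
    next
      case (Inr i)
      then have i: "i \<in> {1..N1}" using j unfolding I_def by auto
      have Bm: "B i \<in> borel_measurable M0" using rv0[OF j] Inr by (simp add: X_def)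
      show ?thesis using B_mom(1)[OF \<open>prob_space M0\<close> Bm B0_01[OF i] B0_prob[OF i]] Inr
        by (simp add: X_def m0_def)
    qed
  qed
  have hq0: "\<And>j. j \<in> I \<Longrightarrow> has_bochner_integral M0 (\<lambda>\<omega>. (X j \<omega>)^2) (q0 j)"
  proof -
    fix j assume j: "j \<in> I"
    show "has_bochner_integral M0 (\<lambda>\<omega>. (X j \<omega>)^2) (q0 j)"
    proof (cases j)
      case (Inl i)
      then have i: "i \<in> {1..N}" using j unfolding I_def by auto
      show ?thesis using Y_H0(2)[OF H0_chi2[OF i] sigma_pos[OF i] \<open>M > 0\<close>] Inl
        by (simp add: X_def q0_def)
    next
      case (Inr i)
      then have i: "i \<in> {1..N1}" using j unfolding I_def by auto
      have Bm: "B i \<in> borel_measurable M0" using rv0[OF j] Inr by (simp add: X_def)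
      show ?thesis using B_mom(2)[OF \<open>prob_space M0\<close> Bm B0_01[OF i] B0_prob[OF i]] Inr
        by (simp add: X_def q0_def)
    qed
  qed
  have hm1: "\<And>j. j \<in> I \<Longrightarrow> has_bochner_integral M1 (X j) (m1 j)"
  proof -
    fix j assume j: "j \<in> I"
    show "has_bochner_integral M1 (X j) (m1 j)"
    proof (cases j)
      case (Inl i)
      then have i: "i \<in> {1..N}" using j unfolding I_def by auto
      show ?thesis using Y_H1[OF H1_ncchi2[OF i] sigma_pos[OF i] \<open>M > 0\<close> eta_nonneg[OF i]] Inl
        by (simp add: X_def m1_def)
    next
      case (Inr i)
      then have i: "i \<in> {1..N1}" using j unfolding I_def by auto
      have Bm: "B i \<in> borel_measurable M1" using rv1[OF j] Inr by (simp add: X_def)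
      show ?thesis using B_mom(1)[OF \<open>prob_space M1\<close> Bm B1_01[OF i] B1_prob[OF i]] Inr
        by (simp add: X_def m1_def)
    qed
  qed
  define a where "a i = eta i * (sigma i)^2 - (if i \<le> N1 then 2 * P i * Delta i else 0)" for i
  define v where "v i = 2 * real M * (sigma i)^4 + (if i \<le> N1 then (Delta i)^2 * P i * (1 - P i) else 0)" for i
  have vpos: "\<And>i. i \<in> {1..N} \<Longrightarrow> v i > 0"
  proof -
    fix i assume i: "i \<in> {1..N}"
    have s4: "2 * real M * (sigma i)^4 > 0" using sigma_pos[OF i] Mpos by simp
    have "(if i \<le> N1 then (Delta i)^2 * P i * (1 - P i) else 0) \<ge> 0"
      using P_range[of i] i by (auto intro!: mult_nonneg_nonneg)
    then show "v i > 0" unfolding v_def using s4 by linarith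
  qed
  have defl: "deflection M0 M1 (Lambda0 N N1 Delta Y B d) (Lambda1 N N1 Delta Y B d)
      = (\<Sum>i=1..N. d i * a i)^2 / (\<Sum>i=1..N. (d i)^2 * v i)" for d
  proof -
    define c0 where "c0 = case_sum (\<lambda>i. d i) (\<lambda>i. d i * Delta i)"
    define c1 where "c1 = case_sum (\<lambda>i. d i) (\<lambda>i. - (d i * Delta i))"
    have L0: "Lambda0 N N1 Delta Y B d = (\<lambda>\<omega>. \<Sum>j\<in>I. c0 j * X j \<omega>)"
    proof
      fix \<omega>
      show "Lambda0 N N1 Delta Y B d \<omega> = (\<Sum>j\<in>I. c0 j * X j \<omega>)"
      proof -
        have "Lambda0 N N1 Delta Y B d \<omega> = (\<Sum>i=1..N1. d i * Y i \<omega>) + (\<Sum>i=N1+1..N. d i * Y i \<omega>) + (\<Sum>i=1..N1. d i * Delta i * B i \<omega>)"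
          unfolding Lambda0_def by (simp add: sum.distrib distrib_left ac_simps)
        also have "\<dots> = (\<Sum>i=1..N. d i * Y i \<omega>) + (\<Sum>i=1..N1. d i * Delta i * B i \<omega>)"
          using split[of "\<lambda>i. d i * Y i \<omega>"] by simp
        also have "\<dots> = (\<Sum>j\<in>I. c0 j * X j \<omega>)"
          unfolding sumI c0_def X_def by simp
        finally show ?thesis .
      qed
    qed
    have L1: "Lambda1 N N1 Delta Y B d = (\<lambda>\<omega>. \<Sum>j\<in>I. c1 j * X j \<omega>)"
    proof
      fix \<omega>
      show "Lambda1 N N1 Delta Y B d \<omega> = (\<Sum>j\<in>I. c1 j * X j \<omega>)"
      proof -
        have "Lambda1 N N1 Delta Y B d \<omega> = (\<Sum>i=1..N1. d i * Y i \<omega>) + (\<Sum>i=N1+1..N. d i * Y i \<omega>) - (\<Sum>i=1..N1. d i * Delta i * B i \<omega>)"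
          unfolding Lambda1_def by (simp add: sum_subtractf right_diff_distrib ac_simps)
        also have "\<dots> = (\<Sum>i=1..N. d i * Y i \<omega>) - (\<Sum>i=1..N1. d i * Delta i * B i \<omega>)"
          using split[of "\<lambda>i. d i * Y i \<omega>"] by simp
        also have "\<dots> = (\<Sum>j\<in>I. c1 j * X j \<omega>)"
          unfolding sumI c1_def X_def by (simp add: sum_negf)
        finally show ?thesis .
      qed
    qed
    have E0: "has_bochner_integral M0 (Lambda0 N N1 Delta Y B d) (\<Sum>j\<in>I. c0 j * m0 j)"
      unfolding L0 by (rule p0.lin_comb_mean[OF hm0])
    have E1: "has_bochner_integral M1 (Lambda1 N N1 Delta Y B d) (\<Sum>j\<in>I. c1 j * m1 j)"
      unfolding L1 by (rule p1.lin_comb_mean[OF hm1])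
    have V0: "has_bochner_integral M0 (\<lambda>\<omega>. (Lambda0 N N1 Delta Y B d \<omega> - (\<Sum>j\<in>I. c0 j * m0 j))^2)
        (\<Sum>j\<in>I. (c0 j)^2 * (q0 j - (m0 j)^2))"
      unfolding L0 by (rule p0.lin_comb_var[OF finI _ hm0 hq0]) (use indep0 in \<open>simp add: I_def X_def\<close>)
    have num: "(\<Sum>j\<in>I. c1 j * m1 j) - (\<Sum>j\<in>I. c0 j * m0 j) = (\<Sum>i=1..N. d i * a i)"
    proof -
      have s1: "(\<Sum>j\<in>I. c1 j * m1 j) = (\<Sum>i=1..N. d i * real M * (sigma i)^2) + (\<Sum>i=1..N. d i * eta i * (sigma i)^2)
           - (\<Sum>i=1..N1. d i * Delta i * P i)"
        unfolding sumI c1_def m1_def by (simp add: sum.distrib[symmetric] sum_negf distrib_left distrib_right ac_simps)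
      have s0: "(\<Sum>j\<in>I. c0 j * m0 j) = (\<Sum>i=1..N. d i * real M * (sigma i)^2) + (\<Sum>i=1..N1. d i * Delta i * P i)"
        unfolding sumI c0_def m0_def by (simp add: ac_simps)
      have "(\<Sum>i=1..N. d i * a i) = (\<Sum>i=1..N. d i * eta i * (sigma i)^2 - (if i \<le> N1 then 2 * (d i * Delta i * P i) else 0))"
        unfolding a_def by (intro sum.cong refl) (simp add: algebra_simps)
      also have "\<dots> = (\<Sum>i=1..N. d i * eta i * (sigma i)^2) - 2 * (\<Sum>i=1..N1. d i * Delta i * P i)"
        by (simp only: sum_subtractf ifsum sum_distrib_left)
      finally have sa: "(\<Sum>i=1..N. d i * a i) = (\<Sum>i=1..N. d i * eta i * (sigma i)^2) - 2 * (\<Sum>i=1..N1. d i * Delta i * P i)" .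
      show ?thesis unfolding s1 s0 sa by simp
    qed
    have den: "(\<Sum>j\<in>I. (c0 j)^2 * (q0 j - (m0 j)^2)) = (\<Sum>i=1..N. (d i)^2 * v i)"
    proof -
      have "(\<Sum>j\<in>I. (c0 j)^2 * (q0 j - (m0 j)^2)) = (\<Sum>i=1..N. (d i)^2 * (2 * real M * (sigma i)^4))
          + (\<Sum>i=1..N1. (d i)^2 * ((Delta i)^2 * P i * (1 - P i)))"
        unfolding sumI c0_def q0_def m0_def
        by (intro arg_cong2[where f="(+)"] sum.cong refl) (simp_all add: power2_eq_square eval_nat_numeral algebra_simps)
      also have "\<dots> = (\<Sum>i=1..N. (d i)^2 * (2 * real M * (sigma i)^4) + (if i \<le> N1 then (d i)^2 * ((Delta i)^2 * P i * (1 - P i)) else 0))"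
        by (simp only: sum.distrib ifsum)
      also have "\<dots> = (\<Sum>i=1..N. (d i)^2 * v i)"
        unfolding v_def by (intro sum.cong refl) (simp add: algebra_simps)
      finally show ?thesis .
    qed
    show ?thesis
      unfolding deflection_def Let_def
      using has_bochner_integral_integral_eq[OF E0] has_bochner_integral_integral_eq[OF E1]
        has_bochner_integral_integral_eq[OF V0] num den by simp
  qed
  have wBe: "\<And>i. i \<in> {1..N1} \<Longrightarrow> wB i = a i / v i"
    unfolding wB_def a_def v_def by (simp add: add.commute)
  have wHe: "\<And>i. i \<in> {N1+1..N} \<Longrightarrow> wH i = a i / v i"
  proof -
    fix i assume i: "i \<in> {N1+1..N}"
    then have i': "i \<in> {1..N}" by auto
    have "sigma i > 0" by (rule sigma_pos[OF i'])
    then show "wH i = a i / v i" using i Mpos unfolding wH_def a_def v_def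
      by (simp add: power2_eq_square eval_nat_numeral field_simps)
  qed
  have Se: "S = (\<Sum>i=1..N. a i / v i)"
    unfolding S_def split[of "\<lambda>i. a i / v i"] using wBe wHe by simp
  have opte: "\<And>i. i \<in> {1..N} \<Longrightarrow> \<delta>opt i = a i / v i / S"
    unfolding \<delta>opt_def using wBe wHe by auto
  have sum1: "(\<Sum>i=1..N. \<delta>opt i) = 1"
  proof -
    have "(\<Sum>i=1..N. \<delta>opt i) = (\<Sum>i=1..N. a i / v i / S)" by (rule sum.cong) (use opte in auto)
    also have "\<dots> = 1" using S_nz unfolding sum_divide_distrib[symmetric] Se[symmetric] by simp
    finally show ?thesis .
  qed
  have Snz: "(\<Sum>i=1..N. a i / v i) \<noteq> 0" using S_nz Se by simp
  have dopt: "deflection M0 M1 (Lambda0 N N1 Delta Y B \<delta>opt) (Lambda1 N N1 Delta Y B \<delta>opt) = (\<Sum>i=1..N. (a i)^2 / v i)"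
  proof -
    have "(\<Sum>i=1..N. \<delta>opt i * a i)^2 / (\<Sum>i=1..N. (\<delta>opt i)^2 * v i)
       = (\<Sum>i=1..N. (a i / v i / (\<Sum>i=1..N. a i / v i)) * a i)^2 / (\<Sum>i=1..N. (a i / v i / (\<Sum>i=1..N. a i / v i))^2 * v i)"
    proof -
      have o2: "\<And>i. i \<in> {1..N} \<Longrightarrow> \<delta>opt i = a i / v i / (\<Sum>i=1..N. a i / v i)"
        using opte Se by simp
      have "(\<Sum>i=1..N. \<delta>opt i * a i) = (\<Sum>i=1..N. (a i / v i / (\<Sum>i=1..N. a i / v i)) * a i)"
        by (rule sum.cong[OF refl]) (simp only: o2)
      moreover have "(\<Sum>i=1..N. (\<delta>opt i)^2 * v i) = (\<Sum>i=1..N. (a i / v i / (\<Sum>i=1..N. a i / v i))^2 * v i)"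
        by (rule sum.cong[OF refl]) (simp only: o2)
      ultimately show ?thesis by (simp only:)
    qed
    also have "\<dots> = (\<Sum>i=1..N. (a i)^2 / v i)"
      by (rule opt_eq[OF _ vpos Snz]) simp_all
    finally show ?thesis using defl by simp
  qed
  have "deflection M0 M1 (Lambda0 N N1 Delta Y B d) (Lambda1 N N1 Delta Y B d)
      \<le> deflection M0 M1 (Lambda0 N N1 Delta Y B \<delta>opt) (Lambda1 N N1 Delta Y B \<delta>opt)"
    if d1: "(\<Sum>i=1..N. d i) = 1" for d
  proof -
    obtain i0 where i0: "i0 \<in> {1..N}" "d i0 \<noteq> 0"
    proof (rule ccontr)
      assume "\<not> thesis"
      then have "\<forall>i\<in>{1..N}. d i = 0" using that by blast
      then have "(\<Sum>i=1..N. d i) = 0" by simp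
      then show False using d1 by simp
    qed
    have "0 < (d i0)^2 * v i0" using i0 vpos[OF i0(1)] by simp
    also have "\<dots> \<le> (\<Sum>i=1..N. (d i)^2 * v i)"
    proof (rule member_le_sum[OF i0(1)])
      fix x assume "x \<in> {1..N} - {i0}"
      then have "v x > 0" using vpos by auto
      then show "0 \<le> (d x)^2 * v x" by simp
    qed simp
    finally have V: "(\<Sum>i=1..N. (d i)^2 * v i) > 0" .
    show ?thesis unfolding defl[of d] dopt
      by (rule opt_ineq[OF _ vpos V]) simp_all
  qed
  then show ?thesis using sum1 by blast
qed


end
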